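(* Let $n \ge 1$ and let $a_1, \dots, a_n$ be positive real numbers with $\sum_{i=1}^n a_i = 1$. Consider vectors $u_{(i,t)}$ indexed by $(i,t) \in [n] \times [3]$ subject to the following constraints: (1) $u_{(i,t)} \cdot u_{(i,t)} = 1$ for all $(i,t)$; (2) $u_{(i,1)} \cdot u_{(i,2)} = 0$ for all $i \in [n]$; (3) $u_{(i,3)} \cdot u_{(i,1)} = u_{(i,3)} \cdot u_{(i,2)} = \frac{1}{\sqrt{2}}$ for all $i \in [n]$; (4) $u_{(i,1)} \cdot u_{(i+1,1)} = u_{(i,2)} \cdot u_{(i+1,2)} = u_{(i,3)} \cdot u_{(i+1,3)} = \cos a_i$ for all $i \in [n]$, where the index $i+1$ is taken modulo $n$ (so $n+1$ means $1$). Then there exists a set $I \subseteq [n]$ with $\sum_{i \in I} a_i = \sum_{i \notin I} a_i$ if and only if there exists a family of vectors in $\mathbb{R}^2$ satisfying these constraints. *)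

theory Defs
  imports "HOL-Analysis.Analysis"
begin

text \<open>Indices are 0-based: i ranges over {0..<n} (paper's [n]), t over {1,2,3}
  (paper's [3]); the successor of i is (i+1) mod n.\<close>

definition cyc_constraints ::
  "nat \<Rightarrow> (nat \<Rightarrow> real) \<Rightarrow> (nat \<Rightarrow> nat \<Rightarrow> 'v::real_inner) \<Rightarrow> bool" where
  "cyc_constraints n a u \<longleftrightarrow>
     (\<forall>i<n. \<forall>t\<in>{1,2,3::nat}. u i t \<bullet> u i t = 1) \<and>
     (\<forall>i<n. u i 1 \<bullet> u i 2 = 0) \<and>
     (\<forall>i<n. u i 3 \<bullet> u i 1 = 1 / sqrt 2 \<and> u i 3 \<bullet> u i 2 = 1 / sqrt 2) \<and>
     (\<forall>i<n. u i 1 \<bullet> u ((i + 1) mod n) 1 = cos (a i) \<and>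
            u i 2 \<bullet> u ((i + 1) mod n) 2 = cos (a i) \<and>
            u i 3 \<bullet> u ((i + 1) mod n) 3 = cos (a i))"

end

theory Submission
  imports Defs
begin

lemma cyc_sum_shift:
  fixes f :: "nat \<Rightarrow> real"
  assumes "n \<ge> 1"
  shows "(\<Sum>i<n. f ((i+1) mod n)) = (\<Sum>i<n. f i)"
proof -
  obtain m where n: "n = Suc m" using assms by (cases n) auto
  have "(\<Sum>i<Suc m. f ((i+1) mod Suc m)) = (\<Sum>i<m. f ((i+1) mod Suc m)) + f 0"
    by (simp add: sum.lessThan_Suc)
  also have "(\<Sum>i<m. f ((i+1) mod Suc m)) = (\<Sum>i<m. f (Suc i))"
    by (rule sum.cong) auto
  also have "(\<Sum>i<m. f (Suc i)) + f 0 = (\<Sum>i<Suc m. f i)"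
    by (subst sum.lessThan_Suc_shift) simp
  finally show ?thesis using n by simp
qed

lemma core:
  fixes th a :: "nat \<Rightarrow> real"
  assumes n: "n \<ge> 1" and pos: "\<And>i. i < n \<Longrightarrow> a i > 0" and s: "(\<Sum>i<n. a i) = 1"
    and c: "\<And>i. i < n \<Longrightarrow> cos (th i - th ((i+1) mod n)) = cos (a i)"
  shows "\<exists>I \<subseteq> {..<n}. (\<Sum>i\<in>I. a i) = (\<Sum>i\<in>{..<n} - I. a i)"
proof -
  have "\<forall>i. \<exists>p. i < n \<longrightarrow> ((fst p = (1::real) \<or> fst p = -1) \<and> snd p \<in> \<int> \<and>
        th i - th ((i+1) mod n) = fst p * a i + 2 * snd p * pi)"
  proof
    fix i
    show "\<exists>p. i < n \<longrightarrow> ((fst p = (1::real) \<or> fst p = -1) \<and> snd p \<in> \<int> \<and>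
        th i - th ((i+1) mod n) = fst p * a i + 2 * snd p * pi)"
    proof (cases "i < n")
      case True
      then obtain k where k: "k \<in> \<int>" and
        "th i - th ((i+1) mod n) = a i + 2*k*pi \<or> th i - th ((i+1) mod n) = - a i + 2*k*pi"
        using c[OF True] cos_eq by blast
      then show ?thesis
        by (metis fst_conv snd_conv mult_1 mult_minus_left)
    qed auto
  qed
  then obtain p where p: "\<And>i. i < n \<Longrightarrow> (fst (p i) = (1::real) \<or> fst (p i) = -1) \<and> snd (p i) \<in> \<int> \<and>
        th i - th ((i+1) mod n) = fst (p i) * a i + 2 * snd (p i) * pi"
    by metis
  define e where "e i = fst (p i)" for i
  define k where "k i = snd (p i)" for i
  have e: "\<And>i. i < n \<Longrightarrow> e i = 1 \<or> e i = -1" and kZ: "\<And>i. i < n \<Longrightarrow> k i \<in> \<int>"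
    and d: "\<And>i. i < n \<Longrightarrow> th i - th ((i+1) mod n) = e i * a i + 2 * k i * pi"
    using p unfolding e_def k_def by auto
  have "(\<Sum>i<n. th i - th ((i+1) mod n)) = 0"
    using cyc_sum_shift[OF n, of th] by (simp add: sum_subtractf)
  hence "(\<Sum>i<n. e i * a i + 2 * k i * pi) = 0"
    using d by (metis (no_types, lifting) lessThan_iff sum.cong)
  hence eq: "(\<Sum>i<n. e i * a i) + 2 * pi * (\<Sum>i<n. k i) = 0"
    by (simp add: sum.distrib sum_distrib_left algebra_simps)
  have "\<bar>\<Sum>i<n. e i * a i\<bar> \<le> (\<Sum>i<n. \<bar>e i * a i\<bar>)" by (rule sum_abs)
  also have "\<dots> = (\<Sum>i<n. a i)"
    apply (rule sum.cong, simp)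
    subgoal for i using e[of i] pos[of i] by (auto simp: abs_mult)
    done
  finally have b: "\<bar>\<Sum>i<n. e i * a i\<bar> \<le> 1" using s by simp
  have KZ: "(\<Sum>i<n. k i) \<in> \<int>" using kZ by (auto intro: Ints_sum)
  have K0: "(\<Sum>i<n. k i) = 0"
  proof (rule ccontr)
    assume ne: "(\<Sum>i<n. k i) \<noteq> 0"
    obtain z :: int where z: "(\<Sum>i<n. k i) = of_int z" using KZ Ints_cases by blast
    with ne have "z \<noteq> 0" by auto
    hence "\<bar>of_int z :: real\<bar> \<ge> 1" by linarith
    hence "\<bar>2 * pi * (\<Sum>i<n. k i)\<bar> \<ge> 2 * pi" using z pi_gt_zero
      by (simp add: abs_mult)
    moreover have "\<bar>2 * pi * (\<Sum>i<n. k i)\<bar> \<le> 1" using eq b by linarith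
    ultimately show False using pi_gt3 by linarith
  qed
  with eq have z: "(\<Sum>i<n. e i * a i) = 0" by simp
  define I where "I = {i. i < n \<and> e i = 1}"
  have "(\<Sum>i<n. e i * a i) = (\<Sum>i\<in>I. e i * a i) + (\<Sum>i\<in>{..<n} - I. e i * a i)"
  proof -
    have "I \<subseteq> {..<n}" by (auto simp: I_def)
    then show ?thesis using sum.subset_diff[of I "{..<n}" "\<lambda>i. e i * a i"] by (simp add: add.commute)
  qed
  also have "(\<Sum>i\<in>I. e i * a i) = (\<Sum>i\<in>I. a i)"
    by (rule sum.cong) (auto simp: I_def)
  also have "(\<Sum>i\<in>{..<n} - I. e i * a i) = (\<Sum>i\<in>{..<n} - I. - a i)"
    apply (rule sum.cong, simp)
    subgoal for i using e[of i] by (auto simp: I_def)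
    done
  finally have "(\<Sum>i\<in>I. a i) = (\<Sum>i\<in>{..<n} - I. a i)"
    using z by (simp add: sum_negf)
  moreover have "I \<subseteq> {..<n}" by (auto simp: I_def)
  ultimately show ?thesis by blast
qed

lemma inner2: "(x::real^2) \<bullet> y = x$1 * y$1 + x$2 * y$2"
  by (simp add: inner_vec_def sum_2)

lemma vec2_eq: "(x::real^2) = y \<longleftrightarrow> x$1 = y$1 \<and> x$2 = y$2"
  by (metis vec_eq_iff exhaust_2)

lemma cs_inner: "vector[cos x, sin x] \<bullet> (vector[cos y, sin y] :: real^2) = cos (x - y)"
  by (simp add: inner2 cos_diff)

lemma cs_inner2: "vector[- sin x, cos x] \<bullet> (vector[- sin y, cos y] :: real^2) = cos (x - y)"
  by (simp add: inner2 cos_diff)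

lemma cs_inner13: "vector[cos (x + pi/4), sin (x + pi/4)] \<bullet> (vector[cos x, sin x] :: real^2) = 1 / sqrt 2"
proof -
  have "vector[cos (x + pi/4), sin (x + pi/4)] \<bullet> (vector[cos x, sin x] :: real^2) = cos ((x + pi/4) - x)"
    by (rule cs_inner)
  also have "\<dots> = sqrt 2 / 2" by (simp add: cos_45)
  also have "\<dots> = 1 / sqrt 2" by (simp add: field_simps)
  finally show ?thesis .
qed

lemma cs_inner23: "vector[cos (x + pi/4), sin (x + pi/4)] \<bullet> (vector[- sin x, cos x] :: real^2) = 1 / sqrt 2"
proof -
  have "vector[cos (x + pi/4), sin (x + pi/4)] \<bullet> (vector[- sin x, cos x] :: real^2) = sin ((x + pi/4) - x)"
    using sin_diff[of "x + pi/4" x] by (simp add: inner2 algebra_simps)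
  also have "\<dots> = sqrt 2 / 2" by (simp add: sin_45)
  also have "\<dots> = 1 / sqrt 2" by (simp add: field_simps)
  finally show ?thesis .
qed

theorem lemma3p2:
  fixes n :: nat and a :: "nat \<Rightarrow> real"
  assumes "n \<ge> 1"
    and "\<And>i. i < n \<Longrightarrow> a i > 0"
    and "(\<Sum>i<n. a i) = 1"
  shows "(\<exists>I \<subseteq> {..<n}. (\<Sum>i\<in>I. a i) = (\<Sum>i\<in>{..<n} - I. a i)) \<longleftrightarrow>
         (\<exists>u :: nat \<Rightarrow> nat \<Rightarrow> real ^ 2. cyc_constraints n a u)"
proof
  assume "\<exists>I \<subseteq> {..<n}. (\<Sum>i\<in>I. a i) = (\<Sum>i\<in>{..<n} - I. a i)"
  then obtain I where I: "I \<subseteq> {..<n}" "(\<Sum>i\<in>I. a i) = (\<Sum>i\<in>{..<n} - I. a i)" by blast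
  define e :: "nat \<Rightarrow> real" where "e i = (if i \<in> I then 1 else -1)" for i
  define th where "th i = (\<Sum>j<i. e j * a j)" for i
  have "(\<Sum>i<n. e i * a i) = (\<Sum>i\<in>I. e i * a i) + (\<Sum>i\<in>{..<n} - I. e i * a i)"
    using sum.subset_diff[of I "{..<n}" "\<lambda>i. e i * a i"] I(1) by (simp add: add.commute)
  also have "\<dots> = (\<Sum>i\<in>I. a i) - (\<Sum>i\<in>{..<n} - I. a i)"
    by (simp add: e_def sum_negf)
  finally have thn: "th n = 0" using I(2) by (simp add: th_def)
  have step: "th ((i+1) mod n) - th i = e i * a i" if "i < n" for i
  proof (cases "i + 1 < n")
    case True then show ?thesis by (simp add: th_def)
  next
    case False
    then have "i + 1 = n" using that by simp
    then have "th n = th i + e i * a i" by (auto simp: th_def)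
    with \<open>i+1 = n\<close> thn show ?thesis by (simp add: th_def)
  qed
  have ce: "cos (e i * a i) = cos (a i)" for i by (simp add: e_def)
  define u :: "nat \<Rightarrow> nat \<Rightarrow> real^2" where
    "u i t = (if t = 1 then vector[cos (th i), sin (th i)]
              else if t = 2 then vector[- sin (th i), cos (th i)]
              else vector[cos (th i + pi/4), sin (th i + pi/4)])" for i t
  have cc: "cos (th i - th ((i+1) mod n)) = cos (a i)" if "i < n" for i
  proof -
    have "th i - th ((i+1) mod n) = - (e i * a i)" using step[OF that] by simp
    then show ?thesis by (simp add: ce)
  qed
  have "cyc_constraints n a u"
    unfolding cyc_constraints_def
  proof (intro conjI allI impI ballI)
    fix i t assume "i < n" "t \<in> {1,2,3::nat}"
    then show "u i t \<bullet> u i t = 1"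
      using cs_inner[of "th i + pi/4" "th i + pi/4"]
      by (auto simp: u_def cs_inner cs_inner2)
  next
    fix i show "u i 1 \<bullet> u i 2 = 0" by (simp add: u_def inner2)
  next
    fix i show "u i 3 \<bullet> u i 1 = 1 / sqrt 2" by (simp add: u_def cs_inner13)
  next
    fix i show "u i 3 \<bullet> u i 2 = 1 / sqrt 2" by (simp add: u_def cs_inner23)
  next
    fix i assume "i < n"
    then show "u i 1 \<bullet> u ((i + 1) mod n) 1 = cos (a i)" using cc[OF \<open>i<n\<close>] by (simp add: u_def cs_inner)
  next
    fix i assume "i < n"
    then show "u i 2 \<bullet> u ((i + 1) mod n) 2 = cos (a i)" using cc[OF \<open>i<n\<close>] by (simp add: u_def cs_inner2)
  next
    fix i assume "i < n"
    then show "u i 3 \<bullet> u ((i + 1) mod n) 3 = cos (a i)"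
      using cs_inner[of "th i + pi/4" "th ((i + 1) mod n) + pi/4"] cc[OF \<open>i<n\<close>] by (simp add: u_def)
  qed
  then show "\<exists>u :: nat \<Rightarrow> nat \<Rightarrow> real ^ 2. cyc_constraints n a u" by blast
next
  assume "\<exists>u :: nat \<Rightarrow> nat \<Rightarrow> real ^ 2. cyc_constraints n a u"
  then obtain u :: "nat \<Rightarrow> nat \<Rightarrow> real ^ 2" where u: "cyc_constraints n a u" by blast
  have "\<forall>i. \<exists>t. i < n \<longrightarrow> u i 1 $ 1 = cos t \<and> u i 1 $ 2 = sin t"
  proof
    fix i show "\<exists>t. i < n \<longrightarrow> u i 1 $ 1 = cos t \<and> u i 1 $ 2 = sin t"
    proof (cases "i < n")
      case True
      then have "u i 1 \<bullet> u i 1 = 1" using u unfolding cyc_constraints_def by auto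
      then have "(u i 1 $ 1)\<^sup>2 + (u i 1 $ 2)\<^sup>2 = 1" by (simp add: inner2 power2_eq_square)
      then obtain t where "u i 1 $ 1 = cos t" "u i 1 $ 2 = sin t" by (rule sincos_total_2pi)
      then show ?thesis by blast
    qed auto
  qed
  then obtain th where th: "\<And>i. i < n \<Longrightarrow> u i 1 $ 1 = cos (th i) \<and> u i 1 $ 2 = sin (th i)"
    by metis
  show "\<exists>I \<subseteq> {..<n}. (\<Sum>i\<in>I. a i) = (\<Sum>i\<in>{..<n} - I. a i)"
  proof (rule core[OF assms, of th])
    fix i assume i: "i < n"
    have "(i+1) mod n < n" using assms(1) by simp
    then have "u i 1 \<bullet> u ((i+1) mod n) 1 = cos (th i - th ((i+1) mod n))"
      using th[OF i] th[of "(i+1) mod n"] by (simp add: inner2 cos_diff)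
    moreover have "u i 1 \<bullet> u ((i+1) mod n) 1 = cos (a i)"
      using u i unfolding cyc_constraints_def by auto
    ultimately show "cos (th i - th ((i+1) mod n)) = cos (a i)" by simp
  qed
qed

end
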